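(* (i) Let $d$ be even and $R_e=\mathbb Z[u_1,u_2,\dots]$ with $|u_i|=i(d+2)-2$. The formulas $m_i[y|\dots|y]=u_i[1]$ ($i\ge1$), together with the strict unitality conditions for $1$, define a (unital) $A_\infty$ structure $A_e$ on the complex $R_e\cdot 1\oplus R_e\cdot y$, i.e. they satisfy $m\circ m=0$ with no relations among the $u_i$; and for every evenly graded commutative ring $R$ and every Moore algebra $A$ over $R$ of degree $d$ there is a unique graded ring map $f:R_e\to R$ with $f_*A_e=A$. (ii) Let $d$ be odd and $R_o=\mathbb Z[v_1,v_2,\dots]\otimes\mathbb Z[w_1,w_2,\dots]$ with $|v_i|=2i(d+2)-d-3$, $|w_i|=2i(d+2)-2$. The formulas $m_{2i-1}[y|\dots|y]=0$ and $m_{2i}[y|\dots|y]=v_i[y]+w_i[1]$ ($i\ge1$), together with strict unitality for $1$, define a unital $A_\infty$ structure $A_o$ on $R_o\cdot1\oplus R_o\cdot y$ (again $m\circ m=0$ holds with no relations), and for every evenly graded commutative ring $R$ and every Moore algebra $A$ over $R$ of degree $d$ there is a unique graded ring map $f:R_o\to R$ with $f_*A_o=A$.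
   Context: Rings are evenly graded commutative. A unital $A_\infty$-algebra over $R$ is a free complex $A$ with a degree $-1$ coderivation $m$ of the tensor coalgebra $T\Sigma A$ ($[a_1|\dots|a_n]$ denoting $\Sigma a_1\otimes\cdots\otimes\Sigma a_n$), with $m^2=0$, $m_0=0$, $m_1$ the suspended differential, and a unit $1$ of degree $0$ with $m_2[1|a]=[a]=(-1)^{|a|}m_2[a|1]$ and $m_i$ ($i\neq2$) vanishing whenever an argument is $1$. A Moore algebra of degree $d$ over $R$ is such an $A_\infty$-algebra whose underlying complex is free on $1$ (degree $0$) and $y$ (degree $d+1$), with differential $\partial y=x\cdot1$ for some $x\in R$; its structure is determined by the elements $m_i[y|\dots|y]$, $i\ge1$. For a graded ring map $f:R\to R'$ and a Moore algebra $A$ over $R$, $f_*A$ is the Moore algebra over $R'$ obtained by applying $f$ to the coefficients of all $m_i[y|\dots|y]$. *)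

theory Defs
  imports Main "HOL-Library.Poly_Mapping"
begin

definition evenly_graded :: "(int \<Rightarrow> 'r::comm_ring_1 set) \<Rightarrow> bool" where
  "evenly_graded G \<longleftrightarrow>
     (\<forall>n. 0 \<in> G n \<and> (\<forall>x\<in>G n. \<forall>y\<in>G n. x + y \<in> G n) \<and> (\<forall>x\<in>G n. - x \<in> G n)) \<and>
     1 \<in> G 0 \<and>
     (\<forall>n k x y. x \<in> G n \<longrightarrow> y \<in> G k \<longrightarrow> x * y \<in> G (n + k)) \<and>
     (\<forall>n. odd n \<longrightarrow> G n = {0}) \<and>
     (\<forall>x. \<exists>!c :: int \<Rightarrow> 'r. (\<forall>n. c n \<in> G n) \<and> finite {n. c n \<noteq> 0} \<and>
            x = (\<Sum>n\<in>{n. c n \<noteq> 0}. c n))"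

definition graded_ring_hom ::
  "(int \<Rightarrow> 'a::comm_ring_1 set) \<Rightarrow> (int \<Rightarrow> 'b::comm_ring_1 set) \<Rightarrow> ('a \<Rightarrow> 'b) \<Rightarrow> bool" where
  "graded_ring_hom G H f \<longleftrightarrow>
     (\<forall>x y. f (x + y) = f x + f y) \<and> (\<forall>x y. f (x * y) = f x * f y) \<and> f 1 = 1 \<and>
     (\<forall>n x. x \<in> G n \<longrightarrow> f x \<in> H n)"

text \<open>Basis of the suspension \<Sigma>A: False stands for [1] (degree 1),
True stands for [y] (degree d+2).  An element of \<Sigma>A is a pair
(coefficient of [1], coefficient of [y]).  A word in {1,y} of length n is a basis
element [w_1|...|w_n] of (\<Sigma>A)^{\<otimes>n}.

The structure m :: nat \<Rightarrow> 'r \<times> 'r records m i = m_i[y|...|y] (i copies of y);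
m 0 = m_0[] is the curvature.\<close>

definition sdeg :: "int \<Rightarrow> bool \<Rightarrow> int" where
  "sdeg d b = (if b then d + 2 else 1)"

definition ksign :: "int \<Rightarrow> 'r::comm_ring_1" where
  "ksign n = (if even n then 1 else -1)"

text \<open>Value of m_n on a basis word, as forced by strict unitality:
m_2[1|a] = [a], m_2[a|1] = (-1)^|a| [a] with |1| = 0, |y| = d+1,
m_i vanishes on words containing 1 for i \<noteq> 2, and m_i[y|...|y] = m i.\<close>

definition mval :: "int \<Rightarrow> (nat \<Rightarrow> 'r::comm_ring_1 \<times> 'r) \<Rightarrow> bool list \<Rightarrow> 'r \<times> 'r" where
  "mval d m w =
     (if w = [False, False] then (1, 0)
      else if w = [False, True] then (0, 1)
      else if w = [True, False] then (0, ksign (d + 1))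
      else if list_all (\<lambda>b. b) w then m (length w)
      else (0, 0))"

text \<open>The term  \<plusminus> m_{n-k+1}(id^j \<otimes> m_k \<otimes> id^{n-j-k}) applied to the word w, with the
Koszul sign (-1)^(sum of suspended degrees of w_1..w_j).\<close>

definition mm_term :: "int \<Rightarrow> (nat \<Rightarrow> 'r::comm_ring_1 \<times> 'r) \<Rightarrow> bool list \<Rightarrow> nat \<Rightarrow> nat \<Rightarrow> 'r \<times> 'r" where
  "mm_term d m w j k =
     (let pre = take j w; mid = take k (drop j w); post = drop (j + k) w;
          c = mval d m mid; s = ksign (sum_list (map (sdeg d) pre));
          u = mval d m (pre @ [False] @ post); v = mval d m (pre @ [True] @ post)
      in (s * (fst c * fst u + snd c * fst v), s * (fst c * snd u + snd c * snd v)))"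

text \<open>The A-infinity relations: the component of m \<circ> m landing in \<Sigma>A vanishes on every
basis word (equivalently, m \<circ> m = 0 for the coderivation m of T\<Sigma>A).\<close>

definition ainf_relations :: "int \<Rightarrow> (nat \<Rightarrow> 'r::comm_ring_1 \<times> 'r) \<Rightarrow> bool" where
  "ainf_relations d m \<longleftrightarrow>
     (\<forall>w. (\<Sum>k\<in>{0..length w}. \<Sum>j\<in>{0..length w - k}. fst (mm_term d m w j k)) = 0 \<and>
          (\<Sum>k\<in>{0..length w}. \<Sum>j\<in>{0..length w - k}. snd (mm_term d m w j k)) = 0)"

text \<open>Moore algebra of degree d over the graded ring (the type 'r with grading G):
m_0 = 0, m_i[y|...|y] = a[1] + b[y] is of degree -1 (so a has degree i(d+2)-2 and b
has degree i(d+2)-d-3), and m \<circ> m = 0.\<close>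

definition moore_algebra :: "(int \<Rightarrow> 'r::comm_ring_1 set) \<Rightarrow> int \<Rightarrow> (nat \<Rightarrow> 'r \<times> 'r) \<Rightarrow> bool" where
  "moore_algebra G d m \<longleftrightarrow>
     m 0 = (0, 0) \<and>
     (\<forall>i\<ge>1. fst (m i) \<in> G (int i * (d + 2) - 2) \<and> snd (m i) \<in> G (int i * (d + 2) - d - 3)) \<and>
     ainf_relations d m"

definition push :: "('a \<Rightarrow> 'b) \<Rightarrow> (nat \<Rightarrow> 'a \<times> 'a) \<Rightarrow> (nat \<Rightarrow> 'b \<times> 'b)" where
  "push f m = (\<lambda>i. (f (fst (m i)), f (snd (m i))))"

type_synonym 'v zpoly = "('v \<Rightarrow>\<^sub>0 nat) \<Rightarrow>\<^sub>0 int"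

definition pvar :: "'v \<Rightarrow> 'v zpoly" where
  "pvar x = Poly_Mapping.single (Poly_Mapping.single x 1) 1"

definition wdeg :: "('v \<Rightarrow> int) \<Rightarrow> ('v \<Rightarrow>\<^sub>0 nat) \<Rightarrow> int" where
  "wdeg wt \<alpha> = (\<Sum>x\<in>Poly_Mapping.keys \<alpha>. int (Poly_Mapping.lookup \<alpha> x) * wt x)"

definition pgrading :: "('v \<Rightarrow> int) \<Rightarrow> int \<Rightarrow> 'v zpoly set" where
  "pgrading wt n = {p. \<forall>\<alpha>\<in>Poly_Mapping.keys p. wdeg wt \<alpha> = n}"

text \<open>R_e = \<int>[u_1,u_2,...]: variable k :: nat stands for u_{k+1}, |u_i| = i(d+2)-2.\<close>
definition Re_deg :: "int \<Rightarrow> nat \<Rightarrow> int" where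
  "Re_deg d k = int (k + 1) * (d + 2) - 2"

definition Ae :: "nat \<Rightarrow> nat zpoly \<times> nat zpoly" where
  "Ae i = (if i = 0 then (0, 0) else (pvar (i - 1), 0))"

text \<open>R_o = \<int>[v_1,v_2,...] \<otimes> \<int>[w_1,w_2,...] = \<int>[v_1,...,w_1,...]:
Inl k stands for v_{k+1}, Inr k stands for w_{k+1};
|v_i| = 2i(d+2)-d-3, |w_i| = 2i(d+2)-2.\<close>
definition Ro_deg :: "int \<Rightarrow> nat + nat \<Rightarrow> int" where
  "Ro_deg d x = (case x of
      Inl k \<Rightarrow> 2 * int (k + 1) * (d + 2) - d - 3
    | Inr k \<Rightarrow> 2 * int (k + 1) * (d + 2) - 2)"

definition Ao :: "nat \<Rightarrow> (nat + nat) zpoly \<times> (nat + nat) zpoly" where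
  "Ao i = (if i = 0 \<or> odd i then (0, 0)
           else (pvar (Inr (i div 2 - 1)), pvar (Inl (i div 2 - 1))))"

end

theory Submission
  imports Defs "HOL-Library.Product_Plus"
begin


lemma ksign_add: "ksign (a + b) = (ksign a * ksign b :: 'r::comm_ring_1)"
  by (auto simp: ksign_def)
lemma ksign_0[simp]: "ksign 0 = 1" by (simp add: ksign_def)
lemma ksign_1[simp]: "ksign 1 = -1" by (simp add: ksign_def)
lemma ksign_plus1: "ksign (a + 1) = - (ksign a :: 'r::comm_ring_1)"
  by (simp add: ksign_add)
lemma ksign_plus2: "ksign (a + 2) = (ksign a :: 'r::comm_ring_1)"
  by (auto simp: ksign_def)
lemma ksign_sq: "ksign a * ksign a = (1 :: 'r::comm_ring_1)"
  by (simp add: ksign_def)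
lemma ksign_even: "even a \<Longrightarrow> ksign a = 1" by (simp add: ksign_def)
lemma ksign_odd: "odd a \<Longrightarrow> ksign a = -1" by (simp add: ksign_def)

lemma mval_noF: assumes "False \<notin> set u" shows "mval d m u = m (length u)"
proof -
  have "list_all (\<lambda>b. b) u" using assms by (metis (full_types) list_all_iff)
  moreover have "u \<noteq> [False, False] \<and> u \<noteq> [False, True] \<and> u \<noteq> [True, False]" using assms by auto
  ultimately show ?thesis unfolding mval_def by simp
qed
lemma mval_F: assumes "False \<in> set u" "length u \<noteq> 2" shows "mval d m u = (0,0)"
proof -
  have "\<not> list_all (\<lambda>b. b) u" using assms by (metis list_all_iff)
  moreover have "u \<noteq> [False, False] \<and> u \<noteq> [False, True] \<and> u \<noteq> [True, False]" using assms by auto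
  ultimately show ?thesis unfolding mval_def by simp
qed

lemma sdeg_allT: "False \<notin> set xs \<Longrightarrow> sum_list (map (sdeg d) xs) = int (length xs) * (d + 2)"
proof (induction xs)
  case (Cons a xs) then show ?case by (cases a) (auto simp: sdeg_def algebra_simps)
qed simp

lemma decomp: "take j w @ take k (drop j w) @ drop (j + k) w = w"
  by (metis append_take_drop_id drop_drop add.commute)

lemma mm_zero_mid: "mval d m (take k (drop j w)) = (0,0) \<Longrightarrow> mm_term d m w j k = (0,0)"
  by (simp add: mm_term_def Let_def)
lemma mm_zero_out: "mval d m (take j w @ [False] @ drop (j+k) w) = (0,0) \<Longrightarrow>
   mval d m (take j w @ [True] @ drop (j+k) w) = (0,0) \<Longrightarrow> mm_term d m w j k = (0,0)"
  by (simp add: mm_term_def Let_def)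

lemma red_mid: "False \<in> set (take k (drop j w)) \<Longrightarrow> j + k \<le> length w \<Longrightarrow> k \<noteq> 2 \<Longrightarrow>
   mm_term d m w j k = (0,0)"
  by (rule mm_zero_mid, rule mval_F) auto

lemma red_out: "False \<in> set (take j w) \<or> False \<in> set (drop (j+k) w) \<Longrightarrow> j + k \<le> length w \<Longrightarrow>
   length w - k + 1 \<noteq> 2 \<Longrightarrow> mm_term d m w j k = (0,0)"
  by (rule mm_zero_out; rule mval_F) auto

lemma red_k: assumes "m 0 = (0,0)" "False \<in> set w" "j + k \<le> length w" "k \<noteq> 2" "k + 1 \<noteq> length w"
  shows "mm_term d m w j k = (0,0)"
proof (cases "False \<in> set (take k (drop j w))")
  case True then show ?thesis using assms by (intro red_mid) auto
next
  case False
  have "False \<in> set (take j w @ take k (drop j w) @ drop (j + k) w)" unfolding decomp using assms(2) .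
  then have "False \<in> set (take j w) \<or> False \<in> set (drop (j+k) w)" using False by auto
  then show ?thesis using assms by (intro red_out) auto
qed

lemma pos_mid: "i < length w \<Longrightarrow> j \<le> i \<Longrightarrow> i < j + k \<Longrightarrow> w ! i \<in> set (take k (drop j w))"
proof -
  assume a: "i < length w" "j \<le> i" "i < j + k"
  have "take k (drop j w) ! (i - j) = w ! i" using a by simp
  moreover have "i - j < length (take k (drop j w))" using a by auto
  ultimately show ?thesis using nth_mem by metis
qed
lemma pos_pre: "i < length w \<Longrightarrow> i < j \<Longrightarrow> w ! i \<in> set (take j w)"
proof -
  assume a: "i < length w" "i < j"
  have "take j w ! i = w ! i" using a by simp
  moreover have "i < length (take j w)" using a by simp
  ultimately show ?thesis using nth_mem by metis
qed
lemma pos_post: "i < length w \<Longrightarrow> j \<le> i \<Longrightarrow> w ! i \<in> set (drop j w)"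
proof -
  assume a: "i < length w" "j \<le> i"
  have "drop j w ! (i - j) = w ! i" using a by simp
  moreover have "i - j < length (drop j w)" using a by auto
  ultimately show ?thesis using nth_mem by metis
qed
lemma take2: "j + 2 \<le> length w \<Longrightarrow> take 2 (drop j w) = [w ! j, w ! Suc j]"
proof -
  assume a: "j + 2 \<le> length w"
  have "drop j w = w ! j # drop (Suc j) w" using a by (simp add: Cons_nth_drop_Suc)
  also have "drop (Suc j) w = w ! Suc j # drop (Suc (Suc j)) w" using a by (simp add: Cons_nth_drop_Suc)
  finally show ?thesis by (simp add: numeral_2_eq_2)
qed

lemma allF_take: "False \<in> set (take j w) \<Longrightarrow> \<exists>i<j. i < length w \<and> w ! i = False"
proof -
  assume "False \<in> set (take j w)"
  then obtain i where "i < length (take j w)" "take j w ! i = False" by (auto simp: in_set_conv_nth)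
  then show ?thesis by auto
qed
lemma allF_drop: "False \<in> set (drop j w) \<Longrightarrow> \<exists>i\<ge>j. i < length w \<and> w ! i = False"
proof -
  assume "False \<in> set (drop j w)"
  then obtain i where "i < length (drop j w)" "drop j w ! i = False" by (auto simp: in_set_conv_nth)
  then show ?thesis by (intro exI[of _ "j + i"]) simp
qed
lemma allF_mid: "False \<in> set (take k (drop j w)) \<Longrightarrow> \<exists>i\<ge>j. i < j + k \<and> i < length w \<and> w ! i = False"
proof -
  assume "False \<in> set (take k (drop j w))"
  then obtain i where "i < length (take k (drop j w))" "take k (drop j w) ! i = False" by (auto simp: in_set_conv_nth)
  then have "i < length w - j" "i < k" "w ! (j + i) = False" by (auto simp: nth_drop)
  then show ?thesis by (intro exI[of _ "j + i"]) simp
qed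


definition MM :: "int \<Rightarrow> (nat \<Rightarrow> 'r::comm_ring_1 \<times> 'r) \<Rightarrow> bool list \<Rightarrow> 'r \<times> 'r" where
  "MM d m w = (\<Sum>k\<in>{0..length w}. \<Sum>j\<in>{0..length w - k}. mm_term d m w j k)"

lemma ainf_from_MM: "(\<And>w. MM d m w = 0) \<Longrightarrow> ainf_relations d m"
  unfolding ainf_relations_def
proof (intro allI conjI)
  fix w assume "\<And>w. MM d m w = 0"
  then have "fst (MM d m w) = 0" "snd (MM d m w) = 0" by simp_all
  then show "(\<Sum>k\<in>{0..length w}. \<Sum>j\<in>{0..length w - k}. fst (mm_term d m w j k)) = 0"
    "(\<Sum>k\<in>{0..length w}. \<Sum>j\<in>{0..length w - k}. snd (mm_term d m w j k)) = 0"
    unfolding MM_def by (simp_all add: fst_sum snd_sum)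
qed

lemma sum_one: "finite S \<Longrightarrow> a \<in> S \<Longrightarrow> (\<And>x. x \<in> S \<Longrightarrow> x \<noteq> a \<Longrightarrow> f x = 0) \<Longrightarrow> sum f S = f a"
proof -
  assume a: "finite S" "a \<in> S" "\<And>x. x \<in> S \<Longrightarrow> x \<noteq> a \<Longrightarrow> f x = 0"
  have "sum f S = sum f {a}" using a by (intro sum.mono_neutral_right) auto
  then show ?thesis by simp
qed
lemma sum_two: "finite S \<Longrightarrow> a \<in> S \<Longrightarrow> b \<in> S \<Longrightarrow> a \<noteq> b \<Longrightarrow>
   (\<And>x. x \<in> S \<Longrightarrow> x \<noteq> a \<Longrightarrow> x \<noteq> b \<Longrightarrow> f x = 0) \<Longrightarrow> sum f S = f a + f b"
proof -
  assume a: "finite S" "a \<in> S" "b \<in> S" "a \<noteq> b" "\<And>x. x \<in> S \<Longrightarrow> x \<noteq> a \<Longrightarrow> x \<noteq> b \<Longrightarrow> f x = 0"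
  have "sum f S = sum f {a, b}" using a by (intro sum.mono_neutral_right) auto
  then show ?thesis using a by simp
qed

lemma split_k:
  assumes m0: "m 0 = (0,0)" and F: "False \<in> set w" and n: "n = length w" "n \<ge> 4"
  shows "MM d m w = (\<Sum>j\<in>{0..n-2}. mm_term d m w j 2) + (mm_term d m w 0 (n-1) + mm_term d m w 1 (n-1))"
proof -
  let ?g = "\<lambda>k. \<Sum>j\<in>{0..n-k}. mm_term d m w j k"
  have "MM d m w = sum ?g {0..n}" unfolding MM_def n(1) ..
  also have "\<dots> = ?g 2 + ?g (n-1)"
  proof (rule sum_two)
    fix k assume k: "k \<in> {0..n}" "k \<noteq> 2" "k \<noteq> n - 1"
    show "?g k = 0"
    proof (rule sum.neutral, rule ballI)
      fix j assume "j \<in> {0..n-k}"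
      then show "mm_term d m w j k = 0" using k n m0 F red_k[where m=m and w=w and j=j and k=k and d=d] by (simp add: zero_prod_def)
    qed
  qed (use n in auto)
  also have "?g (n-1) = mm_term d m w 0 (n-1) + mm_term d m w 1 (n-1)"
  proof -
    have "n - (n-1) = 1" using n by simp
    moreover have "{0..1::nat} = {0,1}" by auto
    ultimately show ?thesis by simp
  qed
  finally show ?thesis by simp
qed

lemma twoF:
  assumes m0: "m 0 = (0,0)" and n: "n = length w" "n \<ge> 4"
    and pq: "p < n" "q < n" "p \<noteq> q" "w ! p = False" "w ! q = False"
  shows "MM d m w = 0"
proof -
  have F: "False \<in> set w" using pq n by (metis nth_mem)
  have A: "mm_term d m w j 2 = 0" if j: "j \<in> {0..n-2}" for j
  proof -
    from j n have jn: "j + 2 \<le> length w" by auto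
    show ?thesis
    proof (cases "p < j \<or> q < j \<or> p \<ge> j + 2 \<or> q \<ge> j + 2")
      case True
      then have "False \<in> set (take j w) \<or> False \<in> set (drop (j+2) w)"
        using pos_pre[of p w j] pos_pre[of q w j] pos_post[of p w "j+2"] pos_post[of q w "j+2"] pq n by auto
      then show ?thesis using red_out[of j w 2 d m] jn n by (simp add: zero_prod_def)
    next
      case False
      then have "p = j \<or> p = Suc j" "q = j \<or> q = Suc j" by auto
      then have "w ! j = False" "w ! Suc j = False" using pq by auto
      then have mid: "take 2 (drop j w) = [False, False]" using take2[OF jn] by simp
      have u: "mval d m (take j w @ [False] @ drop (j + 2) w) = (0,0)" using jn n by (intro mval_F) auto
      show ?thesis unfolding mm_term_def Let_def mid u by (simp add: mval_def zero_prod_def)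
    qed
  qed
  have B: "mm_term d m w j (n-1) = 0" if j: "j \<le> 1" for j
  proof -
    have "\<exists>i. i < n \<and> j \<le> i \<and> i < j + (n-1) \<and> w ! i = False"
    proof (cases "j \<le> p \<and> p < j + (n-1)")
      case True then show ?thesis using pq by blast
    next
      case False then have "j \<le> q \<and> q < j + (n-1)" using pq j n by auto
      then show ?thesis using pq by blast
    qed
    then obtain i where i: "i < n" "j \<le> i" "i < j + (n-1)" "w ! i = False" by blast
    then have "False \<in> set (take (n-1) (drop j w))" using pos_mid[of i w j "n-1"] n by auto
    then show ?thesis using red_mid[of "n-1" j w d m] j n by (simp add: zero_prod_def)
  qed
  have "MM d m w = 0 + (0 + 0)" unfolding split_k[where m=m and d=d, OF m0 F n] using A B by simp
  then show ?thesis by simp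
qed


lemma oneF:
  assumes m0: "m 0 = (0,0)"
    and HFa: "\<forall>i\<ge>1. ksign (int (i-1) * (d+2)) * ksign (d+1) * fst (m i) = - fst (m i)"
    and HFb: "\<forall>i\<ge>1. ksign (int (i-1) * (d+2)) * snd (m i) = - snd (m i)"
    and n: "n = length w" "n \<ge> 4" and p: "p < n" "w ! p = False"
    and uniq: "\<forall>i<n. i \<noteq> p \<longrightarrow> w ! i = True"
  shows "MM d m w = 0"
proof -
  have F: "False \<in> set w" using p n nth_mem by metis
  have npre: "False \<notin> set (take j w)" if "j \<le> p" for j
    using allF_take[of j w] uniq that n by fastforce
  have npost: "False \<notin> set (drop j w)" if "p < j" for j
    using allF_drop[of j w] uniq that n by fastforce
  have nmid: "False \<notin> set (take k (drop j w))" if "p < j \<or> j + k \<le> p" for j k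
    using allF_mid[of k j w] uniq that n by fastforce
  define M where "M = m (n-1)"
  define s :: "nat \<Rightarrow> 'a" where "s j = ksign (int j * (d+2))" for j
  have T2: "mm_term d m w j 2 = (if p = j + 1 then (s j * ksign(d+1) * fst M, s j * ksign(d+1) * snd M)
     else if p = j then (s j * fst M, s j * snd M) else 0)" if j: "j \<le> n-2" for j
  proof -
    have jn: "j + 2 \<le> length w" using j n by auto
    have u: "mval d m (take j w @ [False] @ drop (j + 2) w) = (0,0)" using jn n by (intro mval_F) auto
    consider "p < j \<or> p \<ge> j+2" | "p = j+1" | "p = j" by linarith
    then show ?thesis
    proof cases
      case 1
      then have "False \<in> set (take j w) \<or> False \<in> set (drop (j+2) w)"
        using pos_pre[of p w j] pos_post[of p w "j+2"] p n by auto
      then have "mm_term d m w j 2 = (0,0)" using red_out[of j w 2 d m] jn n by simp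
      then show ?thesis using 1 by (auto simp: zero_prod_def)
    next
      case 2
      have "w ! j = True" using uniq 2 n j by auto
      then have mid: "take 2 (drop j w) = [True, False]" using take2[OF jn] 2 p by simp
      have v: "mval d m (take j w @ [True] @ drop (j + 2) w) = M"
        unfolding M_def using npre[of j] npost[of "j+2"] 2 jn n by (subst mval_noF) (auto intro!: arg_cong[where f=m])
      have sl: "sum_list (map (sdeg d) (take j w)) = int j * (d + 2)"
        using sdeg_allT[OF npre[of j]] 2 jn by simp
      show ?thesis unfolding mm_term_def Let_def mid u v sl using 2 by (simp add: mval_def s_def)
    next
      case 3
      have "w ! Suc j = True" using uniq 3 n j by auto
      then have mid: "take 2 (drop j w) = [False, True]" using take2[OF jn] 3 p by simp
      have v: "mval d m (take j w @ [True] @ drop (j + 2) w) = M"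
        unfolding M_def using npre[of j] npost[of "j+2"] 3 jn n by (subst mval_noF) (auto intro!: arg_cong[where f=m])
      have sl: "sum_list (map (sdeg d) (take j w)) = int j * (d + 2)"
        using sdeg_allT[OF npre[of j]] 3 jn by simp
      show ?thesis unfolding mm_term_def Let_def mid u v sl using 3 by (simp add: mval_def s_def)
    qed
  qed
  have T0: "mm_term d m w 0 (n-1) = (if p = n-1 then (fst M, ksign(d+1) * snd M) else 0)"
  proof (cases "p = n-1")
    case False
    then have "False \<in> set (take (n-1) (drop 0 w))" using pos_mid[of p w 0 "n-1"] p n by auto
    then have "mm_term d m w 0 (n-1) = (0,0)" using red_mid[of "n-1" 0 w d m] n by simp
    then show ?thesis using False by (simp add: zero_prod_def)
  next
    case True
    have mid: "mval d m (take (n-1) (drop 0 w)) = M" unfolding M_def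
      using nmid[of 0 "n-1"] True n by (subst mval_noF) auto
    have "drop (n-1) w = w ! (n-1) # drop n w" using n by (metis Cons_nth_drop_Suc Suc_diff_1 diff_less less_le_trans zero_less_numeral zero_less_one)
    then have post: "drop (0 + (n-1)) w = [False]" using True p n by simp
    show ?thesis unfolding mm_term_def Let_def mid post using True by (simp add: mval_def)
  qed
  have T1: "mm_term d m w 1 (n-1) = (if p = 0 then (- fst M, - snd M) else 0)"
  proof (cases "p = 0")
    case False
    then have "False \<in> set (take (n-1) (drop 1 w))" using pos_mid[of p w 1 "n-1"] p n by auto
    then have "mm_term d m w 1 (n-1) = (0,0)" using red_mid[of "n-1" 1 w d m] n by simp
    then show ?thesis using False by (simp add: zero_prod_def)
  next
    case True
    have mid: "mval d m (take (n-1) (drop 1 w)) = M" unfolding M_def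
      using nmid[of 1 "n-1"] True n by (subst mval_noF) auto
    have pre: "take 1 w = [False]" using True p n by (cases w) auto
    have post: "drop (1 + (n-1)) w = []" using n by simp
    show ?thesis unfolding mm_term_def Let_def mid post pre using True by (simp add: mval_def sdeg_def)
  qed
  have S: "MM d m w = (\<Sum>j\<in>{0..n-2}. mm_term d m w j 2) + (mm_term d m w 0 (n-1) + mm_term d m w 1 (n-1))"
    using split_k[where m=m and d=d, OF m0 F n] .
  consider "p = 0" | "p = n-1" | "0 < p \<and> p < n-1" using p by linarith
  then show ?thesis
  proof cases
    case 1
    have "(\<Sum>j\<in>{0..n-2}. mm_term d m w j 2) = mm_term d m w 0 2"
      by (rule sum_one) (use 1 n T2 in \<open>auto simp: zero_prod_def\<close>)
    moreover have "mm_term d m w 0 2 = (fst M, snd M)" using T2[of 0] 1 n by (simp add: s_def)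
    ultimately show ?thesis unfolding S T0 T1 using 1 n by (simp add: prod_eq_iff)
  next
    case 2
    have "(\<Sum>j\<in>{0..n-2}. mm_term d m w j 2) = mm_term d m w (n-2) 2"
      by (rule sum_one) (use 2 n T2 in \<open>auto simp: zero_prod_def\<close>)
    moreover have hh: "s (n-2) * ksign (d+1) * fst M = - fst M" "s (n-2) * snd M = - snd M"
    proof -
      have i: "n - 1 \<ge> 1" "n - 1 - 1 = n - 2" using n by auto
      have "ksign (int (n-1-1) * (d+2)) * ksign (d+1) * fst (m (n-1)) = - fst (m (n-1))"
        "ksign (int (n-1-1) * (d+2)) * snd (m (n-1)) = - snd (m (n-1))"
        using HFa HFb i(1) by blast+
      then show "s (n-2) * ksign (d+1) * fst M = - fst M" "s (n-2) * snd M = - snd M"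
        unfolding s_def M_def i(2) by simp_all
    qed
    moreover have "mm_term d m w (n-2) 2 = (s (n-2) * ksign(d+1) * fst M, s (n-2) * ksign(d+1) * snd M)"
    proof -
      have "p = (n-2) + 1" using 2 n by arith
      then show ?thesis using T2[of "n-2"] n by simp
    qed
    moreover have "ksign (d+1) * snd M + s (n-2) * ksign (d+1) * snd M = 0"
    proof -
      have "ksign (d+1) * snd M + s (n-2) * ksign (d+1) * snd M = ksign (d+1) * (snd M + s (n-2) * snd M)"
        by (simp add: algebra_simps)
      also have "\<dots> = 0" using hh(2) by simp
      finally show ?thesis .
    qed
    ultimately show ?thesis unfolding S T0 T1 using 2 n by (simp add: prod_eq_iff add.commute)
  next
    case 3
    have "(\<Sum>j\<in>{0..n-2}. mm_term d m w j 2) = mm_term d m w (p-1) 2 + mm_term d m w p 2"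
      by (rule sum_two) (use 3 n T2 in \<open>auto simp: zero_prod_def\<close>)
    moreover have "s p = s (p-1) * ksign (d+2)"
    proof -
      have "int p * (d+2) = int (p-1) * (d+2) + (d+2)" using 3 by (simp add: algebra_simps of_nat_diff)
      then show ?thesis unfolding s_def by (simp add: ksign_add)
    qed
    moreover have "ksign (d+2) = (- ksign (d+1) :: 'a)" using ksign_plus1[of "d+1"] by (simp add: add.assoc)
    moreover have "mm_term d m w (p-1) 2 = (s (p-1) * ksign(d+1) * fst M, s (p-1) * ksign(d+1) * snd M)"
    proof -
      have "p - 1 \<le> n - 2" "p = (p - 1) + 1" using 3 by arith+
      then show ?thesis using T2[of "p-1"] by simp
    qed
    moreover have "mm_term d m w p 2 = (s p * fst M, s p * snd M)"
    proof -
      have "p \<le> n - 2" using 3 by arith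
      then show ?thesis using T2[of p] by simp
    qed
    ultimately show ?thesis unfolding S T0 T1 using 3 n by (simp add: algebra_simps prod_eq_iff)
  qed
qed


lemma mval_simps: "mval d m [False,False] = (1,0)" "mval d m [False,True] = (0,1)" "mval d m [True,False] = (0,ksign (d+1))"
  by (simp_all add: mval_def)
lemma ksign_cases: "ksign d = (1::'a::comm_ring_1) \<or> ksign d = -1" by (simp add: ksign_def)

lemma small_p: assumes m0: "m 0 = (0,0)" and k: "ksign d = (1::'a::comm_ring_1)"
  and e: "snd (m (Suc 0)) + snd (m (Suc 0)) = 0" "snd (m (Suc (Suc 0))) + snd (m (Suc (Suc 0))) = (0::'a)"
  shows "MM d m [False] = 0" "MM d m [False,False] = 0" "MM d m [False,True] = 0" "MM d m [True,False] = 0"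
    "MM d m [False,False,False] = 0" "MM d m [False,False,True] = 0" "MM d m [False,True,False] = 0" "MM d m [True,False,False] = 0"
    "MM d m [False,True,True] = 0" "MM d m [True,False,True] = 0" "MM d m [True,True,False] = 0"
  unfolding MM_def
  apply (simp_all add: atLeast0_atMost_Suc)
  apply (simp_all add: mm_term_def Let_def mval_simps mval_F mval_noF m0 sdeg_def ksign_plus1 ksign_plus2 k zero_prod_def prod_eq_iff)
  apply (simp_all add: eq_neg_iff_add_eq_0 neg_eq_iff_add_eq_0 mult_2 mult_2_right e)
  done

lemma small_n: assumes m0: "m 0 = (0,0)" and k: "ksign d = (-1::'a::comm_ring_1)"
  and e: "snd (m (Suc 0)) + snd (m (Suc 0)) = 0" "fst (m (Suc 0)) + fst (m (Suc 0)) = (0::'a)"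
  shows "MM d m [False] = 0" "MM d m [False,False] = 0" "MM d m [False,True] = 0" "MM d m [True,False] = 0"
    "MM d m [False,False,False] = 0" "MM d m [False,False,True] = 0" "MM d m [False,True,False] = 0" "MM d m [True,False,False] = 0"
    "MM d m [False,True,True] = 0" "MM d m [True,False,True] = 0" "MM d m [True,True,False] = 0"
  unfolding MM_def
  apply (simp_all add: atLeast0_atMost_Suc)
  apply (simp_all add: mm_term_def Let_def mval_simps mval_F mval_noF m0 sdeg_def ksign_plus1 ksign_plus2 k zero_prod_def prod_eq_iff)
  apply (simp_all add: eq_neg_iff_add_eq_0 neg_eq_iff_add_eq_0 mult_2 mult_2_right e)
  done

lemma small:
  assumes m0: "m 0 = (0,0)"
    and HFa: "\<forall>i\<ge>1. ksign (int (i-1) * (d+2)) * ksign (d+1) * fst (m i) = - fst (m i)"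
    and HFb: "\<forall>i\<ge>1. ksign (int (i-1) * (d+2)) * snd (m i) = - snd (m i)"
    and w: "length w \<le> 3" "False \<in> set w"
  shows "MM d m w = (0::'a::comm_ring_1 \<times> 'a)"
proof -
  have W: "w \<in> {[False], [False,False], [False,True], [True,False],
    [False,False,False], [False,False,True], [False,True,False], [True,False,False],
    [False,True,True], [True,False,True], [True,True,False]}"
  proof (cases w)
    case Nil then show ?thesis using w by simp
  next
    case (Cons a v)
    show ?thesis
    proof (cases v)
      case Nil then show ?thesis using Cons w by (cases a) simp_all
    next
      case (Cons b v')
      show ?thesis
      proof (cases v')
        case Nil then show ?thesis using Cons \<open>w = a # v\<close> w by (cases a; cases b) simp_all
      next
        case (Cons c v'')
        then have "v'' = []" using \<open>w = a # v\<close> \<open>v = b # v'\<close> w(1) by simp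
        then show ?thesis using Cons \<open>w = a # v\<close> \<open>v = b # v'\<close> w by (cases a; cases b; cases c) simp_all
      qed
    qed
  qed
  have b1: "snd (m (Suc 0)) + snd (m (Suc 0)) = 0"
    using HFb[rule_format, of 1] by (simp add: eq_neg_iff_add_eq_0)
  consider (p) "ksign d = (1::'a)" | (n) "ksign d = (-1::'a)" using ksign_cases by blast
  then show ?thesis
  proof cases
    case p
    have b2: "snd (m (Suc (Suc 0))) + snd (m (Suc (Suc 0))) = 0"
      using HFb[rule_format, of 2] p by (simp add: ksign_plus2 eq_neg_iff_add_eq_0 numeral_2_eq_2)
    show ?thesis using W small_p[where m=m and d=d, OF m0 p b1 b2] by auto
  next
    case n
    have a1: "fst (m (Suc 0)) + fst (m (Suc 0)) = 0"
      using HFa[rule_format, of 1] n by (simp add: ksign_plus1 eq_neg_iff_add_eq_0)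
    show ?thesis using W small_n[where m=m and d=d, OF m0 n b1 a1] by auto
  qed
qed

lemma ksign_sq2: "ksign a * (ksign a * x) = (x::'a::comm_ring_1)" "ksign a * x * ksign a = x"
  by (simp_all add: ksign_def)

lemma mvalU: "mval d m (replicate a True @ False # replicate b True) =
   (if a = 0 \<and> b = 1 then (0,1) else if a = 1 \<and> b = 0 then (0, ksign (d+1)) else (0,0))"
proof (cases "a + b = 1")
  case True
  then have "(a = 0 \<and> b = 1) \<or> (a = 1 \<and> b = 0)" by arith
  then show ?thesis by (auto simp: mval_def)
next
  case False
  then have "mval d m (replicate a True @ False # replicate b True) = (0,0)" by (intro mval_F) auto
  then show ?thesis using False by auto
qed

lemma allT:
  assumes m0: "m 0 = (0,0)"
    and HT: "\<forall>n k. k \<le> n \<longrightarrow> snd (m k) * (\<Sum>j\<in>{0..n-k}. ksign (int j * (d+2))) * fst (m (n-k+1)) = 0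
       \<and> snd (m k) * (\<Sum>j\<in>{0..n-k}. ksign (int j * (d+2))) * snd (m (n-k+1)) = (0::'a::comm_ring_1)"
  shows "MM d m (replicate n True) = 0"
proof -
  let ?w = "replicate n True"
  define s :: "nat \<Rightarrow> 'a" where "s j = ksign (int j * (d+2))" for j
  define U where "U j k = snd (mval d m (replicate j True @ [False] @ replicate (n-j-k) True))" for j k
  have mmT: "mm_term d m ?w j k = (0, s j * fst (m k) * U j k) +
      (s j * snd (m k) * fst (m (n-k+1)), s j * snd (m k) * snd (m (n-k+1)))" if jk: "j + k \<le> n" for j k
  proof -
    have pre: "take j ?w = replicate j True" using jk by simp
    have mid: "take k (drop j ?w) = replicate k True" using jk by simp
    have post: "drop (j+k) ?w = replicate (n-j-k) True" by simp
    have c: "mval d m (replicate k True) = m k" by (simp add: mval_noF)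
    have v: "mval d m (replicate j True @ [True] @ replicate (n-j-k) True) = m (n-k+1)"
      using jk by (subst mval_noF) (auto intro!: arg_cong[where f=m])
    have fu: "fst (mval d m (replicate j True @ [False] @ replicate (n-j-k) True)) = 0" by (simp add: mvalU)
    have sl: "sum_list (map (sdeg d) (replicate j True)) = int j * (d+2)" by (simp add: sdeg_def sum_list_replicate)
    show ?thesis unfolding mm_term_def Let_def pre mid post c v sl using fu by (simp add: U_def s_def algebra_simps)
  qed
  have perk: "(\<Sum>j\<in>{0..n-k}. mm_term d m ?w j k) = 0" if k: "k \<le> n" for k
  proof -
    have "(\<Sum>j\<in>{0..n-k}. mm_term d m ?w j k) = (\<Sum>j\<in>{0..n-k}. (0, s j * fst (m k) * U j k)) +
       (\<Sum>j\<in>{0..n-k}. (s j * snd (m k) * fst (m (n-k+1)), s j * snd (m k) * snd (m (n-k+1))))"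
      unfolding sum.distrib[symmetric] by (rule sum.cong) (use mmT k in auto)
    also have "(\<Sum>j\<in>{0..n-k}. (0, s j * fst (m k) * U j k)) = 0"
    proof (cases "k + 1 = n")
      case True
      then have nk: "n - k = 1" by simp
      have "{0..1::nat} = {0,1}" by auto
      then have "(\<Sum>j\<in>{0..n-k}. (0, s j * fst (m k) * U j k)) = (0, s 0 * fst (m k) * U 0 k) + (0, s 1 * fst (m k) * U 1 k)"
        unfolding nk by simp
      also have "\<dots> = 0" using True
        by (simp add: U_def mvalU s_def ksign_plus1 ksign_plus2 zero_prod_def nk mval_simps ksign_sq2)
      finally show ?thesis .
    next
      case False
      have "U j k = 0" if "j \<in> {0..n-k}" for j using False that k by (auto simp: U_def mvalU)
      then show ?thesis by (simp add: zero_prod_def[symmetric])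
    qed
    also have "(\<Sum>j\<in>{0..n-k}. (s j * snd (m k) * fst (m (n-k+1)), s j * snd (m k) * snd (m (n-k+1)))) =
       (snd (m k) * (\<Sum>j\<in>{0..n-k}. s j) * fst (m (n-k+1)), snd (m k) * (\<Sum>j\<in>{0..n-k}. s j) * snd (m (n-k+1)))"
      by (simp add: sum_prod sum_distrib_left sum_distrib_right algebra_simps)
    also have "\<dots> = 0" using HT k unfolding s_def by (simp add: zero_prod_def)
    finally show ?thesis by simp
  qed
  show ?thesis unfolding MM_def length_replicate by (rule sum.neutral) (use perk in auto)
qed

lemma ainf_generic:
  assumes m0: "m 0 = (0,0)"
    and HFa: "\<forall>i\<ge>1. ksign (int (i-1) * (d+2)) * ksign (d+1) * fst (m i) = - fst (m i)"
    and HFb: "\<forall>i\<ge>1. ksign (int (i-1) * (d+2)) * snd (m i) = - snd (m i)"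
    and HT: "\<forall>n k. k \<le> n \<longrightarrow> snd (m k) * (\<Sum>j\<in>{0..n-k}. ksign (int j * (d+2))) * fst (m (n-k+1)) = 0
       \<and> snd (m k) * (\<Sum>j\<in>{0..n-k}. ksign (int j * (d+2))) * snd (m (n-k+1)) = (0::'a::comm_ring_1)"
  shows "ainf_relations d m"
proof (rule ainf_from_MM)
  fix w :: "bool list"
  show "MM d m w = 0"
  proof (cases "False \<in> set w")
    case False
    then have "replicate (length w) True = w" by (intro replicate_length_same) (metis (full_types))
    then show ?thesis using allT[where m=m and d=d, OF m0 HT, of "length w"] by simp
  next
    case F: True
    show ?thesis
    proof (cases "length w \<le> 3")
      case True then show ?thesis using small[where m=m and d=d, OF m0 HFa HFb True F] by simp
    next
      case False
      then have n4: "length w \<ge> 4" by simp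
      obtain p where p: "p < length w" "w ! p = False" using F by (metis in_set_conv_nth)
      show ?thesis
      proof (cases "\<exists>q<length w. q \<noteq> p \<and> w ! q = False")
        case True
        then obtain q where "q < length w" "q \<noteq> p" "w ! q = False" by blast
        then show ?thesis using twoF[where m=m and d=d, OF m0 refl n4 p(1) \<open>q < length w\<close>] p by auto
      next
        case False
        then have "\<forall>i<length w. i \<noteq> p \<longrightarrow> w ! i = True" by auto
        then show ?thesis using oneF[where m=m and d=d, OF m0 HFa HFb refl n4 p] by simp
      qed
    qed
  qed
qed


lemma wdeg_superset: "finite S \<Longrightarrow> Poly_Mapping.keys a \<subseteq> S \<Longrightarrow>
   wdeg wt a = (\<Sum>x\<in>S. int (Poly_Mapping.lookup a x) * wt x)"
  unfolding wdeg_def by (rule sum.mono_neutral_left) (auto simp: in_keys_iff)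

lemma wdeg_add: "wdeg wt (a + b) = wdeg wt a + wdeg wt b"
proof -
  let ?S = "Poly_Mapping.keys a \<union> Poly_Mapping.keys b"
  have "wdeg wt (a + b) = (\<Sum>x\<in>?S. int (Poly_Mapping.lookup (a+b) x) * wt x)"
    by (rule wdeg_superset) (auto simp: keys_add)
  also have "\<dots> = (\<Sum>x\<in>?S. int (Poly_Mapping.lookup a x) * wt x) + (\<Sum>x\<in>?S. int (Poly_Mapping.lookup b x) * wt x)"
    by (simp add: lookup_add sum.distrib algebra_simps)
  also have "\<dots> = wdeg wt a + wdeg wt b"
    by (subst (1 2) wdeg_superset[of ?S]) auto
  finally show ?thesis .
qed

lemma wdeg_zero[simp]: "wdeg wt 0 = 0" by (simp add: wdeg_def)

lemma wdeg_single: "wdeg wt (Poly_Mapping.single x 1) = wt x" unfolding wdeg_def by simp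
lemma wdeg_single': "wdeg wt (Poly_Mapping.single x (Suc 0)) = wt x" unfolding wdeg_def by simp

lemma wdeg_even: "(\<And>x. even (wt x)) \<Longrightarrow> even (wdeg wt a)"
  unfolding wdeg_def by (intro dvd_sum) auto

lemma keys_pvar: "Poly_Mapping.keys (pvar x) = {Poly_Mapping.single x 1}"
  by (simp add: pvar_def)

lemma pvar_grading: "pvar x \<in> pgrading wt (wt x)"
  by (simp add: pgrading_def keys_pvar wdeg_single wdeg_single')

lemma zero_grading[simp]: "0 \<in> pgrading wt n" by (simp add: pgrading_def)

definition restr :: "('v \<Rightarrow> int) \<Rightarrow> 'v zpoly \<Rightarrow> int \<Rightarrow> 'v zpoly" where
  "restr wt p n = Abs_poly_mapping (\<lambda>a. if wdeg wt a = n then Poly_Mapping.lookup p a else 0)"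

lemma lookup_restr: "Poly_Mapping.lookup (restr wt p n) a = (if wdeg wt a = n then Poly_Mapping.lookup p a else 0)"
proof -
  have "finite {a. (if wdeg wt a = n then Poly_Mapping.lookup p a else 0) \<noteq> 0}"
    by (rule finite_subset[of _ "Poly_Mapping.keys p"]) (auto simp: in_keys_iff)
  then show ?thesis unfolding restr_def by simp
qed

lemma evenly_graded_pgrading:
  assumes ev: "\<And>x. even (wt x)"
  shows "evenly_graded (pgrading wt)"
  unfolding evenly_graded_def
proof (intro conjI allI impI)
  fix n
  show "0 \<in> pgrading wt n" by simp
  show "\<forall>x\<in>pgrading wt n. \<forall>y\<in>pgrading wt n. x + y \<in> pgrading wt n"
  proof (intro ballI)
    fix x y assume xy: "x \<in> pgrading wt n" "y \<in> pgrading wt n"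
    show "x + y \<in> pgrading wt n" unfolding pgrading_def
    proof (intro CollectI ballI)
      fix a assume "a \<in> Poly_Mapping.keys (x + y)"
      then have "a \<in> Poly_Mapping.keys x \<or> a \<in> Poly_Mapping.keys y" using keys_add[of x y] by blast
      then show "wdeg wt a = n" using xy unfolding pgrading_def by blast
    qed
  qed
  show "\<forall>x\<in>pgrading wt n. - x \<in> pgrading wt n"
    unfolding pgrading_def by simp
next
  show "1 \<in> pgrading wt 0" by (simp add: pgrading_def)
next
  fix n k x y
  assume "x \<in> pgrading wt n" "y \<in> pgrading wt k"
  then show "x * y \<in> pgrading wt (n + k)"
  proof (unfold pgrading_def, intro CollectI ballI)
    assume xy: "x \<in> {p. \<forall>a\<in>Poly_Mapping.keys p. wdeg wt a = n}" "y \<in> {p. \<forall>a\<in>Poly_Mapping.keys p. wdeg wt a = k}"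
    fix a assume "a \<in> Poly_Mapping.keys (x * y)"
    then obtain b c where "a = b + c" "b \<in> Poly_Mapping.keys x" "c \<in> Poly_Mapping.keys y"
      using keys_mult[of x y] by blast
    then show "wdeg wt a = n + k" using xy by (simp add: wdeg_add)
  qed
next
  fix n :: int assume "odd n"
  show "pgrading wt n = {0}"
  proof
    show "pgrading wt n \<subseteq> {0}"
    proof
      fix p assume p: "p \<in> pgrading wt n"
      have "Poly_Mapping.keys p = {}"
      proof (rule ccontr)
        assume "Poly_Mapping.keys p \<noteq> {}"
        then obtain a where "a \<in> Poly_Mapping.keys p" by blast
        then have "wdeg wt a = n" using p by (simp add: pgrading_def)
        then show False using wdeg_even[of wt a, OF ev] \<open>odd n\<close> by simp
      qed
      then show "p \<in> {0}" by simp
    qed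
  qed simp
next
  fix x :: "'a zpoly"
  let ?R = "restr wt x"
  have R_grad: "?R n \<in> pgrading wt n" for n
    by (auto simp: pgrading_def in_keys_iff lookup_restr split: if_splits)
  have fin: "finite {n. ?R n \<noteq> 0}"
  proof (rule finite_subset[of _ "wdeg wt ` Poly_Mapping.keys x"])
    show "{n. ?R n \<noteq> 0} \<subseteq> wdeg wt ` Poly_Mapping.keys x"
    proof
      fix n assume "n \<in> {n. ?R n \<noteq> 0}"
      then have "?R n \<noteq> 0" by simp
      then obtain a where "Poly_Mapping.lookup (?R n) a \<noteq> 0" using poly_mapping_eqI[of "?R n" 0] by auto
      then show "n \<in> wdeg wt ` Poly_Mapping.keys x" by (auto simp: lookup_restr in_keys_iff split: if_splits)
    qed
  qed simp
  have sum_lookup: "Poly_Mapping.lookup (\<Sum>n\<in>N. c n) a = (if wdeg wt a \<in> N then Poly_Mapping.lookup (c (wdeg wt a)) a else 0)"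
    if "finite N" "\<And>n. c n \<in> pgrading wt n" for N and c :: "int \<Rightarrow> 'a zpoly" and a
  proof -
    have "Poly_Mapping.lookup (\<Sum>n\<in>N. c n) a = (\<Sum>n\<in>N. Poly_Mapping.lookup (c n) a)" by (simp add: lookup_sum)
    also have "\<dots> = (\<Sum>n\<in>N. if n = wdeg wt a then Poly_Mapping.lookup (c (wdeg wt a)) a else 0)"
    proof (rule sum.cong)
      fix n assume "n \<in> N"
      show "Poly_Mapping.lookup (c n) a = (if n = wdeg wt a then Poly_Mapping.lookup (c (wdeg wt a)) a else 0)"
        using that(2)[of n] by (auto simp: pgrading_def in_keys_iff)
    qed simp
    also have "\<dots> = (if wdeg wt a \<in> N then Poly_Mapping.lookup (c (wdeg wt a)) a else 0)"
      using that(1) by (simp add: sum.delta')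
    finally show ?thesis .
  qed
  have uniq: "c = ?R" if c: "\<forall>n. c n \<in> pgrading wt n" "finite {n. c n \<noteq> 0}" "x = (\<Sum>n\<in>{n. c n \<noteq> 0}. c n)" for c
  proof
    fix n
    show "c n = ?R n"
    proof (rule poly_mapping_eqI)
      fix a
      show "Poly_Mapping.lookup (c n) a = Poly_Mapping.lookup (?R n) a"
      proof (cases "wdeg wt a = n")
        case True
        have "Poly_Mapping.lookup x a = (if n \<in> {n. c n \<noteq> 0} then Poly_Mapping.lookup (c n) a else 0)"
          using sum_lookup[of "{n. c n \<noteq> 0}" c a] c True by simp
        then show ?thesis using True by (auto simp: lookup_restr)
      next
        case False
        have "a \<notin> Poly_Mapping.keys (c n)" using c(1) False by (auto simp: pgrading_def)
        then show ?thesis using False by (simp add: lookup_restr in_keys_iff)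
      qed
    qed
  qed
  have ex: "x = (\<Sum>n\<in>{n. ?R n \<noteq> 0}. ?R n)"
  proof (rule poly_mapping_eqI)
    fix a
    have "Poly_Mapping.lookup (\<Sum>n\<in>{n. ?R n \<noteq> 0}. ?R n) a =
       (if wdeg wt a \<in> {n. ?R n \<noteq> 0} then Poly_Mapping.lookup (?R (wdeg wt a)) a else 0)"
      using sum_lookup[of "{n. ?R n \<noteq> 0}" ?R a] fin R_grad by blast
    also have "\<dots> = Poly_Mapping.lookup x a"
    proof (cases "?R (wdeg wt a) = 0")
      case True
      have "Poly_Mapping.lookup x a = Poly_Mapping.lookup (?R (wdeg wt a)) a" by (simp add: lookup_restr)
      then show ?thesis using True by simp
    next
      case False then show ?thesis by (simp add: lookup_restr)
    qed
    finally show "Poly_Mapping.lookup x a = Poly_Mapping.lookup (\<Sum>n\<in>{n. ?R n \<noteq> 0}. ?R n) a" by simp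
  qed
  show "\<exists>!c. (\<forall>n. c n \<in> pgrading wt n) \<and> finite {n. c n \<noteq> 0} \<and> x = (\<Sum>n\<in>{n. c n \<noteq> 0}. c n)"
  proof (rule ex1I[of _ ?R])
    show "(\<forall>n. ?R n \<in> pgrading wt n) \<and> finite {n. ?R n \<noteq> 0} \<and> x = (\<Sum>n\<in>{n. ?R n \<noteq> 0}. ?R n)"
      using R_grad fin ex by simp
  next
    fix c assume H: "(\<forall>n. c n \<in> pgrading wt n) \<and> finite {n. c n \<noteq> 0} \<and> x = (\<Sum>n\<in>{n. c n \<noteq> 0}. c n)"
    show "c = ?R" using H by (intro uniq) auto
  qed
qed


definition Emon :: "('v \<Rightarrow> 'r::comm_ring_1) \<Rightarrow> ('v \<Rightarrow>\<^sub>0 nat) \<Rightarrow> 'r" where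
  "Emon g a = (\<Prod>x\<in>Poly_Mapping.keys a. g x ^ Poly_Mapping.lookup a x)"
definition ev :: "('v \<Rightarrow> 'r::comm_ring_1) \<Rightarrow> 'v zpoly \<Rightarrow> 'r" where
  "ev g p = (\<Sum>a\<in>Poly_Mapping.keys p. of_int (Poly_Mapping.lookup p a) * Emon g a)"

lemma Emon_superset: "finite S \<Longrightarrow> Poly_Mapping.keys a \<subseteq> S \<Longrightarrow>
    Emon g a = (\<Prod>x\<in>S. g x ^ Poly_Mapping.lookup a x)"
  unfolding Emon_def by (rule prod.mono_neutral_left) (auto simp: in_keys_iff)

lemma Emon_add: "Emon g (a + b) = Emon g a * Emon g b"
proof -
  let ?S = "Poly_Mapping.keys a \<union> Poly_Mapping.keys b"
  have "Emon g (a + b) = (\<Prod>x\<in>?S. g x ^ Poly_Mapping.lookup (a + b) x)"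
    by (rule Emon_superset) (auto simp: keys_add)
  also have "\<dots> = (\<Prod>x\<in>?S. g x ^ Poly_Mapping.lookup a x) * (\<Prod>x\<in>?S. g x ^ Poly_Mapping.lookup b x)"
    by (simp add: lookup_add power_add prod.distrib)
  also have "\<dots> = Emon g a * Emon g b"
    by (subst (1 2) Emon_superset[of ?S]) auto
  finally show ?thesis .
qed

lemma Emon_zero[simp]: "Emon g 0 = 1" by (simp add: Emon_def)

lemma ev_superset: "finite S \<Longrightarrow> Poly_Mapping.keys p \<subseteq> S \<Longrightarrow>
    ev g p = (\<Sum>a\<in>S. of_int (Poly_Mapping.lookup p a) * Emon g a)"
  unfolding ev_def by (rule sum.mono_neutral_left) (auto simp: in_keys_iff)

lemma ev_add: "ev g (p + q) = ev g p + ev g q"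
proof -
  let ?S = "Poly_Mapping.keys p \<union> Poly_Mapping.keys q"
  have "ev g (p + q) = (\<Sum>a\<in>?S. of_int (Poly_Mapping.lookup (p + q) a) * Emon g a)"
    by (rule ev_superset) (auto simp: keys_add)
  also have "\<dots> = (\<Sum>a\<in>?S. of_int (Poly_Mapping.lookup p a) * Emon g a) + (\<Sum>a\<in>?S. of_int (Poly_Mapping.lookup q a) * Emon g a)"
    by (simp add: lookup_add sum.distrib algebra_simps)
  also have "\<dots> = ev g p + ev g q"
    by (subst (1 2) ev_superset[of ?S]) auto
  finally show ?thesis .
qed

lemma ev_zero[simp]: "ev g 0 = 0" by (simp add: ev_def)

lemma ev_uminus: "ev g (- p) = - ev g p"
  unfolding ev_def by (simp add: sum_negf)

lemma ev_diff: "ev g (p - q) = ev g p - ev g q"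
  using ev_add[of g p "- q"] by (simp add: ev_uminus)

lemma ev_frag: "ev g (frag_of a) = Emon g a"
  by (simp add: ev_def)

lemma ev_frag_mult: "ev g (frag_of a * q) = Emon g a * ev g q"
  using subset_UNIV
proof (induction q rule: frag_induction)
  case zero then show ?case by simp
next
  case (one b) then show ?case by (simp add: mult_single ev_frag Emon_add)
next
  case (diff x y) then show ?case by (simp add: right_diff_distrib ev_diff)
qed

lemma ev_mult: "ev g (p * q) = ev g p * ev g q"
  using subset_UNIV
proof (induction p rule: frag_induction)
  case zero then show ?case by simp
next
  case (one b) then show ?case by (simp add: ev_frag_mult ev_frag)
next
  case (diff x y) then show ?case by (simp add: left_diff_distrib ev_diff)
qed

lemma ev_one: "ev g 1 = 1"
  using ev_frag[of g 0] by simp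

lemma ev_pvar: "ev g (pvar x) = g x"
  unfolding pvar_def ev_frag Emon_def by simp

context
  fixes G :: "int \<Rightarrow> 'r::comm_ring_1 set"
  assumes G: "evenly_graded G"
begin

lemma G0: "0 \<in> G n" using G unfolding evenly_graded_def by blast
lemma Gadd: "x \<in> G n \<Longrightarrow> y \<in> G n \<Longrightarrow> x + y \<in> G n" using G unfolding evenly_graded_def by blast
lemma Gneg: "x \<in> G n \<Longrightarrow> - x \<in> G n" using G unfolding evenly_graded_def by blast
lemma G1: "1 \<in> G 0" using G unfolding evenly_graded_def by blast
lemma Gmult: "x \<in> G n \<Longrightarrow> y \<in> G k \<Longrightarrow> x * y \<in> G (n + k)" using G unfolding evenly_graded_def by blast
lemma Godd: "odd n \<Longrightarrow> x \<in> G n \<Longrightarrow> x = 0" using G unfolding evenly_graded_def by blast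

lemma Gsum: "finite S \<Longrightarrow> (\<And>i. i \<in> S \<Longrightarrow> f i \<in> G n) \<Longrightarrow> sum f S \<in> G n"
  by (induction S rule: finite_induct) (auto intro: G0 Gadd)

lemma Gprod: "finite S \<Longrightarrow> (\<And>i. i \<in> S \<Longrightarrow> f i \<in> G (dg i)) \<Longrightarrow> prod f S \<in> G (\<Sum>i\<in>S. dg i)"
proof (induction S rule: finite_induct)
  case empty then show ?case using G1 by simp
next
  case (insert a S) then show ?case using Gmult[of "f a" "dg a" "prod f S" "\<Sum>i\<in>S. dg i"] by simp
qed

lemma Gpow: "x \<in> G k \<Longrightarrow> x ^ j \<in> G (int j * k)"
proof (induction j)
  case 0 then show ?case using G1 by simp
next
  case (Suc j) then show ?case using Gmult[of x k "x ^ j" "int j * k"] by (simp add: algebra_simps)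
qed

lemma Gof_nat: "of_nat j \<in> G 0"
proof (induction j)
  case 0 then show ?case using G0 by simp
next
  case (Suc j) then show ?case using Gadd[OF G1 Suc] by (simp add: add.commute)
qed

lemma Gof_int: "of_int c \<in> G 0"
proof (cases "c \<ge> 0")
  case True then show ?thesis using Gof_nat[of "nat c"] by simp
next
  case False then show ?thesis using Gneg[OF Gof_nat[of "nat (- c)"]] by simp
qed

lemma Emon_grade: "(\<And>x. g x \<in> G (wt x)) \<Longrightarrow> Emon g a \<in> G (wdeg wt a)"
  unfolding Emon_def wdeg_def by (rule Gprod) (auto intro: Gpow)

lemma ev_grade: "(\<And>x. g x \<in> G (wt x)) \<Longrightarrow> p \<in> pgrading wt n \<Longrightarrow> ev g p \<in> G n"
  unfolding ev_def
proof (rule Gsum)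
  fix a assume g: "\<And>x. g x \<in> G (wt x)" and p: "p \<in> pgrading wt n" and a: "a \<in> Poly_Mapping.keys p"
  have "wdeg wt a = n" using p a by (simp add: pgrading_def)
  have E: "Emon g a \<in> G (wdeg wt a)" by (rule Emon_grade) (rule g)
  show "of_int (Poly_Mapping.lookup p a) * Emon g a \<in> G n"
    using Gmult[OF Gof_int E] \<open>wdeg wt a = n\<close> by simp
qed simp

lemma ev_hom: "(\<And>x. g x \<in> G (wt x)) \<Longrightarrow> graded_ring_hom (pgrading wt) G (ev g)"
  unfolding graded_ring_hom_def using ev_add ev_mult ev_one ev_grade by blast

end

lemma frag_of_add: "frag_of (u + v) = frag_of u * frag_of v"
  by (simp add: mult_single)

lemma hom_unique:
  fixes h :: "'v zpoly \<Rightarrow> 'r::comm_ring_1"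
  assumes h: "graded_ring_hom H G h" and hv: "\<And>x. h (pvar x) = g x"
  shows "h = ev g"
proof -
  have hadd: "h (a + b) = h a + h b" for a b using h unfolding graded_ring_hom_def by blast
  have hmul: "h (a * b) = h a * h b" for a b using h unfolding graded_ring_hom_def by blast
  have h1: "h 1 = 1" using h unfolding graded_ring_hom_def by blast
  have h0: "h 0 = 0" using hadd[of 0 0] by simp
  have hdiff: "h (a - b) = h a - h b" for a b using hadd[of "a - b" b] by (simp add: algebra_simps)
  have hpow: "h (a ^ k) = h a ^ k" for a k by (induction k) (simp_all add: h1 hmul)
  have hprod: "finite S \<Longrightarrow> h (\<Prod>x\<in>S. f x) = (\<Prod>x\<in>S. h (f x))" for S and f :: "'v \<Rightarrow> 'v zpoly"
    by (induction S rule: finite_induct) (simp_all add: h1 hmul)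
  have single_pow: "frag_of (Poly_Mapping.single x k) = pvar x ^ k" for x k
  proof (induction k)
    case 0 then show ?case by simp
  next
    case (Suc k)
    have "Poly_Mapping.single x (Suc k) = Poly_Mapping.single x 1 + Poly_Mapping.single x k"
      by (simp add: single_add[symmetric])
    then show ?case using Suc by (simp add: frag_of_add pvar_def)
  qed
  have frag_sum: "finite S \<Longrightarrow> frag_of (\<Sum>x\<in>S. s x) = (\<Prod>x\<in>S. frag_of (s x))" for S and s :: "'v \<Rightarrow> ('v \<Rightarrow>\<^sub>0 nat)"
    by (induction S rule: finite_induct) (simp_all add: frag_of_add)
  have mono_sum: "a = (\<Sum>x\<in>Poly_Mapping.keys a. Poly_Mapping.single x (Poly_Mapping.lookup a x))" for a :: "'v \<Rightarrow>\<^sub>0 nat"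
  proof (rule poly_mapping_eqI)
    fix y
    show "Poly_Mapping.lookup a y = Poly_Mapping.lookup (\<Sum>x\<in>Poly_Mapping.keys a. Poly_Mapping.single x (Poly_Mapping.lookup a x)) y"
      by (simp add: lookup_sum lookup_single when_def in_keys_iff sum.delta)
  qed
  have hfrag: "h (frag_of a) = Emon g a" for a
  proof -
    have "frag_of a = (\<Prod>x\<in>Poly_Mapping.keys a. pvar x ^ Poly_Mapping.lookup a x)"
      by (subst mono_sum) (simp add: frag_sum single_pow)
    then show ?thesis by (simp add: hprod hpow hv Emon_def)
  qed
  show ?thesis
  proof
    fix p
    show "h p = ev g p"
      using subset_UNIV
    proof (induction p rule: frag_induction)
      case zero then show ?case by (simp add: h0)
    next
      case (one a) then show ?case by (simp add: hfrag ev_frag)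
    next
      case (diff a b) then show ?case by (simp add: hdiff ev_diff)
    qed
  qed
qed


lemma altsum: "odd (c::int) \<Longrightarrow> (\<Sum>j\<in>{0..N}. ksign (int j * c)) = (if even N then 1 else (0::'a::comm_ring_1))"
proof (induction N)
  case 0 then show ?case by simp
next
  case (Suc N)
  have "(\<Sum>j\<in>{0..Suc N}. ksign (int j * c)) = (\<Sum>j\<in>{0..N}. ksign (int j * c)) + (ksign (int (Suc N) * c) :: 'a)"
    by (simp add: atLeast0_atMost_Suc add.commute)
  also have "(ksign (int (Suc N) * c) :: 'a) = (if even N then -1 else 1)"
    using Suc.prems by (simp add: ksign_def)
  finally show ?case using Suc by simp
qed

lemma part_even:
  assumes d: "even d"
  shows "evenly_graded (pgrading (Re_deg d)) \<and>
       moore_algebra (pgrading (Re_deg d)) d Ae \<and>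
       (\<forall>(G :: int \<Rightarrow> 'r::comm_ring_1 set) (m :: nat \<Rightarrow> 'r \<times> 'r).
          evenly_graded G \<and> moore_algebra G d m \<longrightarrow>
          (\<exists>!f. graded_ring_hom (pgrading (Re_deg d)) G f \<and> push f Ae = m))"
proof (intro conjI allI impI)
  show "evenly_graded (pgrading (Re_deg d))"
    by (rule evenly_graded_pgrading) (use d in \<open>simp add: Re_deg_def\<close>)
  have deg: "Re_deg d (i - 1) = int i * (d + 2) - 2" if "i \<ge> 1" for i
    using that by (simp add: Re_deg_def of_nat_diff)
  show "moore_algebra (pgrading (Re_deg d)) d Ae"
    unfolding moore_algebra_def
  proof (intro conjI allI impI)
    show "Ae 0 = (0,0)" by (simp add: Ae_def)
  next
    fix i :: nat assume i: "i \<ge> 1"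
    show "fst (Ae i) \<in> pgrading (Re_deg d) (int i * (d + 2) - 2)"
      using pvar_grading[of "i-1" "Re_deg d"] deg[OF i] i by (simp add: Ae_def)
    show "snd (Ae i) \<in> pgrading (Re_deg d) (int i * (d + 2) - d - 3)"
      using i by (simp add: Ae_def)
  next
    show "ainf_relations d Ae"
    proof (rule ainf_generic)
      show "Ae 0 = (0,0)" by (simp add: Ae_def)
      show "\<forall>i\<ge>1. ksign (int (i-1) * (d+2)) * ksign (d+1) * fst (Ae i) = - fst (Ae i)"
        using d by (simp add: ksign_def)
      show "\<forall>i\<ge>1. ksign (int (i-1) * (d+2)) * snd (Ae i) = - snd (Ae i)"
        by (simp add: Ae_def)
      show "\<forall>n k. k \<le> n \<longrightarrow> snd (Ae k) * (\<Sum>j\<in>{0..n-k}. ksign (int j * (d+2))) * fst (Ae (n-k+1)) = 0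
       \<and> snd (Ae k) * (\<Sum>j\<in>{0..n-k}. ksign (int j * (d+2))) * snd (Ae (n-k+1)) = 0"
        by (simp add: Ae_def)
    qed
  qed
next
  fix G :: "int \<Rightarrow> 'r::comm_ring_1 set" and m :: "nat \<Rightarrow> 'r \<times> 'r"
  assume H: "evenly_graded G \<and> moore_algebra G d m"
  then have G: "evenly_graded G" and M: "moore_algebra G d m" by auto
  define g where "g k = fst (m (Suc k))" for k
  have gdeg: "g k \<in> G (Re_deg d k)" for k
    using M unfolding moore_algebra_def g_def Re_deg_def by (metis Suc_eq_plus1 le_add2)
  have snd0: "snd (m i) = 0" if "i \<ge> 1" for i
  proof (rule Godd[OF G])
    show "snd (m i) \<in> G (int i * (d + 2) - d - 3)" using M that unfolding moore_algebra_def by blast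
    show "odd (int i * (d + 2) - d - 3)" using d by simp
  qed
  have m0: "m 0 = (0,0)" using M unfolding moore_algebra_def by blast
  have push: "push (ev g) Ae = m"
  proof
    fix i show "push (ev g) Ae i = m i"
    proof (cases "i = 0")
      case True then show ?thesis by (simp add: push_def Ae_def m0)
    next
      case False
      then have "Suc (i - 1) = i" by simp
      then show ?thesis using False snd0[of i] by (simp add: push_def Ae_def ev_pvar g_def prod_eq_iff)
    qed
  qed
  show "\<exists>!f. graded_ring_hom (pgrading (Re_deg d)) G f \<and> push f Ae = m"
  proof (rule ex1I[of _ "ev g"])
    show "graded_ring_hom (pgrading (Re_deg d)) G (ev g) \<and> push (ev g) Ae = m"
      using ev_hom[OF G gdeg] push by simp
  next
    fix f assume f: "graded_ring_hom (pgrading (Re_deg d)) G f \<and> push f Ae = m"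
    show "f = ev g"
    proof (rule hom_unique)
      show "graded_ring_hom (pgrading (Re_deg d)) G f" using f by simp
      fix x
      have "push f Ae (Suc x) = m (Suc x)" using f by simp
      then show "f (pvar x) = g x" by (simp add: push_def Ae_def g_def prod_eq_iff)
    qed
  qed
qed


lemma Ao_even: "Ao (2 * k + 2) = (pvar (Inr k), pvar (Inl k))"
  by (simp add: Ao_def)

lemma Ao_odd: "i = 0 \<or> odd i \<Longrightarrow> Ao i = (0,0)"
  by (auto simp: Ao_def)

lemma even_form: "(i::nat) \<noteq> 0 \<Longrightarrow> even i \<Longrightarrow> i = 2 * (i div 2 - 1) + 2"
  by auto

lemma part_odd:
  assumes d: "odd d"
  shows "evenly_graded (pgrading (Ro_deg d)) \<and>
       moore_algebra (pgrading (Ro_deg d)) d Ao \<and>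
       (\<forall>(G :: int \<Rightarrow> 'r::comm_ring_1 set) (m :: nat \<Rightarrow> 'r \<times> 'r).
          evenly_graded G \<and> moore_algebra G d m \<longrightarrow>
          (\<exists>!f. graded_ring_hom (pgrading (Ro_deg d)) G f \<and> push f Ao = m))"
proof (intro conjI allI impI)
  show "evenly_graded (pgrading (Ro_deg d))"
    by (rule evenly_graded_pgrading) (use d in \<open>simp add: Ro_deg_def split: sum.splits\<close>)
  show "moore_algebra (pgrading (Ro_deg d)) d Ao"
    unfolding moore_algebra_def
  proof (intro conjI allI impI)
    show "Ao 0 = (0,0)" by (simp add: Ao_def)
  next
    fix i :: nat assume i: "i \<ge> 1"
    show "fst (Ao i) \<in> pgrading (Ro_deg d) (int i * (d + 2) - 2)"
    proof (cases "odd i")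
      case True then show ?thesis by (simp add: Ao_odd)
    next
      case False
      define k where "k = i div 2 - 1"
      have ik: "i = 2 * k + 2" using False i unfolding k_def by (intro even_form) auto
      have "Ro_deg d (Inr k) = int i * (d + 2) - 2" unfolding ik Ro_deg_def by (simp add: algebra_simps)
      then show ?thesis using pvar_grading[of "Inr k" "Ro_deg d"] unfolding ik Ao_even by simp
    qed
    show "snd (Ao i) \<in> pgrading (Ro_deg d) (int i * (d + 2) - d - 3)"
    proof (cases "odd i")
      case True then show ?thesis by (simp add: Ao_odd)
    next
      case False
      define k where "k = i div 2 - 1"
      have ik: "i = 2 * k + 2" using False i unfolding k_def by (intro even_form) auto
      have "Ro_deg d (Inl k) = int i * (d + 2) - d - 3" unfolding ik Ro_deg_def by (simp add: algebra_simps)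
      then show ?thesis using pvar_grading[of "Inl k" "Ro_deg d"] unfolding ik Ao_even by simp
    qed
  next
    show "ainf_relations d Ao"
    proof (rule ainf_generic)
      show "Ao 0 = (0,0)" by (simp add: Ao_def)
      have s: "ksign (int (i-1) * (d+2)) = (-1 :: (nat + nat) zpoly)" "ksign (d+1) = (1 :: (nat + nat) zpoly)"
        if "i \<ge> 1" "even i" for i
        using that d by (simp_all add: ksign_def of_nat_diff)
      show "\<forall>i\<ge>1. ksign (int (i-1) * (d+2)) * ksign (d+1) * fst (Ao i) = - fst (Ao i)"
      proof (intro allI impI)
        fix i :: nat assume i: "i \<ge> 1"
        show "ksign (int (i-1) * (d+2)) * ksign (d+1) * fst (Ao i) = - fst (Ao i)"
        proof (cases "odd i")
          case True then show ?thesis by (simp add: Ao_odd)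
        next
          case False
          have "ksign (int (i-1) * (d+2)) = (-1 :: (nat + nat) zpoly)" "ksign (d+1) = (1 :: (nat + nat) zpoly)"
            using s[OF i] False by simp_all
          then show ?thesis by simp
        qed
      qed
      show "\<forall>i\<ge>1. ksign (int (i-1) * (d+2)) * snd (Ao i) = - snd (Ao i)"
      proof (intro allI impI)
        fix i :: nat assume i: "i \<ge> 1"
        show "ksign (int (i-1) * (d+2)) * snd (Ao i) = - snd (Ao i)"
        proof (cases "odd i")
          case True then show ?thesis by (simp add: Ao_odd)
        next
          case False
          have "ksign (int (i-1) * (d+2)) = (-1 :: (nat + nat) zpoly)"
            using s[OF i] False by simp_all
          then show ?thesis by simp
        qed
      qed
      show "\<forall>n k. k \<le> n \<longrightarrow> snd (Ao k) * (\<Sum>j\<in>{0..n-k}. ksign (int j * (d+2))) * fst (Ao (n-k+1)) = 0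
       \<and> snd (Ao k) * (\<Sum>j\<in>{0..n-k}. ksign (int j * (d+2))) * snd (Ao (n-k+1)) = 0"
      proof (intro allI impI)
        fix n k :: nat assume kn: "k \<le> n"
        show "snd (Ao k) * (\<Sum>j\<in>{0..n-k}. ksign (int j * (d+2))) * fst (Ao (n-k+1)) = 0
       \<and> snd (Ao k) * (\<Sum>j\<in>{0..n-k}. ksign (int j * (d+2))) * snd (Ao (n-k+1)) = 0"
        proof (cases "k = 0 \<or> odd k")
          case True then show ?thesis by (simp add: Ao_odd)
        next
          case False
          show ?thesis
          proof (cases "even (n - k)")
            case True then have "Ao (n-k+1) = (0,0)" by (intro Ao_odd) simp
            then show ?thesis by simp
          next
            case False
            have "(\<Sum>j\<in>{0..n-k}. ksign (int j * (d+2))) = (0 :: (nat + nat) zpoly)"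
              using altsum[of "d+2" "n-k"] d False by simp
            then show ?thesis by simp
          qed
        qed
      qed
    qed
  qed
next
  fix G :: "int \<Rightarrow> 'r::comm_ring_1 set" and m :: "nat \<Rightarrow> 'r \<times> 'r"
  assume H: "evenly_graded G \<and> moore_algebra G d m"
  then have G: "evenly_graded G" and M: "moore_algebra G d m" by auto
  define g where "g x = (case x of Inl k \<Rightarrow> snd (m (2 * k + 2)) | Inr k \<Rightarrow> fst (m (2 * k + 2)))" for x
  have mdeg: "fst (m i) \<in> G (int i * (d + 2) - 2)" "snd (m i) \<in> G (int i * (d + 2) - d - 3)" if "i \<ge> 1" for i
    using M that unfolding moore_algebra_def by blast+
  have gdeg: "g x \<in> G (Ro_deg d x)" for x
  proof (cases x)
    case (Inl k)
    have "Ro_deg d x = int (2 * k + 2) * (d + 2) - d - 3" unfolding Inl Ro_deg_def by (simp add: algebra_simps)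
    then show ?thesis using mdeg(2)[of "2 * k + 2"] unfolding g_def Inl by simp
  next
    case (Inr k)
    have "Ro_deg d x = int (2 * k + 2) * (d + 2) - 2" unfolding Inr Ro_deg_def by (simp add: algebra_simps)
    then show ?thesis using mdeg(1)[of "2 * k + 2"] unfolding g_def Inr by simp
  qed
  have m0: "m 0 = (0,0)" using M unfolding moore_algebra_def by blast
  have modd: "m i = (0,0)" if "odd i" for i
  proof -
    have i: "i \<ge> 1" using that by (cases i) auto
    have "fst (m i) = 0" by (rule Godd[OF G _ mdeg(1)[OF i]]) (use that d in simp)
    moreover have "snd (m i) = 0" by (rule Godd[OF G _ mdeg(2)[OF i]]) (use that d in simp)
    ultimately show ?thesis by (simp add: prod_eq_iff)
  qed
  have push: "push (ev g) Ao = m"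
  proof
    fix i show "push (ev g) Ao i = m i"
    proof (cases "i = 0 \<or> odd i")
      case True then show ?thesis using m0 modd by (auto simp: push_def Ao_odd)
    next
      case False
      define k where "k = i div 2 - 1"
      have ik: "i = 2 * k + 2" using False unfolding k_def by (intro even_form) auto
      show ?thesis unfolding ik push_def Ao_even by (simp add: ev_pvar g_def)
    qed
  qed
  show "\<exists>!f. graded_ring_hom (pgrading (Ro_deg d)) G f \<and> push f Ao = m"
  proof (rule ex1I[of _ "ev g"])
    show "graded_ring_hom (pgrading (Ro_deg d)) G (ev g) \<and> push (ev g) Ao = m"
      using ev_hom[OF G gdeg] push by simp
  next
    fix f assume f: "graded_ring_hom (pgrading (Ro_deg d)) G f \<and> push f Ao = m"
    show "f = ev g"
    proof (rule hom_unique)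
      show "graded_ring_hom (pgrading (Ro_deg d)) G f" using f by simp
      fix x
      show "f (pvar x) = g x"
      proof (cases x)
        case (Inl k)
        have "push f Ao (2 * k + 2) = m (2 * k + 2)" using f by simp
        then show ?thesis unfolding Inl push_def Ao_even g_def by (simp add: prod_eq_iff)
      next
        case (Inr k)
        have "push f Ao (2 * k + 2) = m (2 * k + 2)" using f by simp
        then show ?thesis unfolding Inr push_def Ao_even g_def by (simp add: prod_eq_iff)
      qed
    qed
  qed
qed

theorem mainTheorem9:
  fixes d :: int
  shows
   "(even d \<longrightarrow>
       evenly_graded (pgrading (Re_deg d)) \<and>
       moore_algebra (pgrading (Re_deg d)) d Ae \<and>
       (\<forall>(G :: int \<Rightarrow> 'r::comm_ring_1 set) (m :: nat \<Rightarrow> 'r \<times> 'r).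
          evenly_graded G \<and> moore_algebra G d m \<longrightarrow>
          (\<exists>!f. graded_ring_hom (pgrading (Re_deg d)) G f \<and> push f Ae = m))) \<and>
    (odd d \<longrightarrow>
       evenly_graded (pgrading (Ro_deg d)) \<and>
       moore_algebra (pgrading (Ro_deg d)) d Ao \<and>
       (\<forall>(G :: int \<Rightarrow> 'r::comm_ring_1 set) (m :: nat \<Rightarrow> 'r \<times> 'r).
          evenly_graded G \<and> moore_algebra G d m \<longrightarrow>
          (\<exists>!f. graded_ring_hom (pgrading (Ro_deg d)) G f \<and> push f Ao = m)))"
  using part_even[of d] part_odd[of d] by blast


end
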